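(* Let $\mathbf{V}\in\mathbb{R}^{L\times d}$, let $L=km$ and let $G_1,\dots,G_k$ be a partition of $\{1,\dots,L\}$ into groups of size $m$. Let $M\in\mathbb{R}^{k\times L}$ be given by $M_{g,i}=1/m$ if $i\in G_g$ and $M_{g,i}=0$ otherwise. Put $H=2\mathbf{V}^\top\mathbf{V}$ and $\bar H=2\mathbf{V}^\top M^\top M\mathbf{V}$. Then $\lambda_{\max}(\bar H)\le \lambda_{\max}(H)/m$.
   Context: $\lambda_{\max}$ denotes the largest eigenvalue of a symmetric matrix. *)

theory Defs
  imports "Jordan_Normal_Form.Char_Poly"
begin

definition lambda_max :: "real mat \<Rightarrow> real" where
  "lambda_max A = Max {a. eigenvalue A a}"

definition avg_mat :: "nat \<Rightarrow> nat \<Rightarrow> nat \<Rightarrow> (nat \<Rightarrow> nat set) \<Rightarrow> real mat" where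
  "avg_mat k L m G = mat k L (\<lambda>(g, i). if i \<in> G g then 1 / real m else 0)"

end

theory Submission imports Defs "HOL-Analysis.Function_Topology" "HOL-Analysis.Convex" begin

definition Bf :: "nat \<Rightarrow> (nat \<Rightarrow> nat \<Rightarrow> real) \<Rightarrow> (nat \<Rightarrow> real) \<Rightarrow> (nat \<Rightarrow> real) \<Rightarrow> real" where
  "Bf d a f g = (\<Sum>i<d. \<Sum>j<d. a i j * f i * g j)"

lemma cpt: "compact ((Pi UNIV (\<lambda>_. {-1..1::real})) \<inter> {f::nat\<Rightarrow>real. (\<Sum>i<d. (f i)^2) = 1})"
proof (rule compact_Int_closed)
  have "compactin (product_topology (\<lambda>_. euclidean) UNIV) (PiE UNIV (\<lambda>_. {-1..1::real}))"
    by (simp add: compactin_PiE)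
  then show "compact (Pi UNIV (\<lambda>_. {-1..1::real}))"
    by (simp add: euclidean_product_topology PiE_UNIV_domain)
  show "closed {f::nat\<Rightarrow>real. (\<Sum>i<d. (f i)^2) = 1}"
    by (intro closed_Collect_eq continuous_intros continuous_on_product_coordinates)
qed

lemma max_exists:
  assumes "d > 0"
  shows "\<exists>u. (\<Sum>i<d. (u i)^2) = 1 \<and> (\<forall>x. (\<Sum>i<d. (x i)^2) = 1 \<longrightarrow> Bf d a x x \<le> Bf d a u u)"
proof -
  let ?K = "(Pi UNIV (\<lambda>_. {-1..1::real})) \<inter> {f::nat\<Rightarrow>real. (\<Sum>i<d. (f i)^2) = 1}"
  have "(\<Sum>i<d. ((if i = 0 then 1 else 0::real))^2) = (\<Sum>i<d. if i = 0 then 1 else 0)"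
    by (rule sum.cong) auto
  then have ne: "(\<lambda>i. if i = 0 then 1 else 0) \<in> ?K" using assms by auto
  have "continuous_on ?K (\<lambda>f. Bf d a f f)"
    unfolding Bf_def by (intro continuous_intros continuous_on_product_then_coordinatewise continuous_on_id)
  from continuous_attains_sup[OF cpt[of d] _ this] ne obtain u where u: "u \<in> ?K"
    and max: "\<And>y. y \<in> ?K \<Longrightarrow> Bf d a y y \<le> Bf d a u u" by blast
  show ?thesis
  proof (intro exI conjI allI impI)
    show "(\<Sum>i<d. (u i)^2) = 1" using u by auto
    fix x :: "nat \<Rightarrow> real" assume x: "(\<Sum>i<d. (x i)^2) = 1"
    define x' where "x' = (\<lambda>i. if i < d then x i else 0)"
    have "Bf d a x x = Bf d a x' x'" unfolding Bf_def x'_def by simp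
    also have "\<dots> \<le> Bf d a u u"
    proof (rule max)
      have "(x i)^2 \<le> 1" if "i < d" for i
      proof -
        have "(x i)^2 \<le> (\<Sum>i<d. (x i)^2)" using that by (intro member_le_sum) auto
        then show ?thesis using x by simp
      qed
      then have "\<bar>x i\<bar> \<le> 1" if "i < d" for i using that abs_square_le_1 by blast
      then show "x' \<in> ?K" using x unfolding x'_def by (auto simp: abs_le_iff)
    qed
    finally show "Bf d a x x \<le> Bf d a u u" .
  qed
qed

lemma Bf_add: "Bf d a (\<lambda>i. f i + g i) (\<lambda>i. f i + g i) = Bf d a f f + Bf d a f g + Bf d a g f + Bf d a g g"
  unfolding Bf_def by (simp add: algebra_simps sum.distrib)

lemma Bf_scale: "Bf d a (\<lambda>i. c * f i) (\<lambda>i. c * f i) = c^2 * Bf d a f f"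
  unfolding Bf_def by (simp add: sum_distrib_left algebra_simps power2_eq_square)

lemma Bf_scale_r: "Bf d a f (\<lambda>i. c * g i) = c * Bf d a f g"
  unfolding Bf_def by (simp add: sum_distrib_left algebra_simps)

lemma Bf_scale_l: "Bf d a (\<lambda>i. c * g i) f = c * Bf d a g f"
  unfolding Bf_def by (simp add: sum_distrib_left algebra_simps)

lemma Bf_sym: assumes "\<And>i j. i<d \<Longrightarrow> j<d \<Longrightarrow> a i j = a j i"
  shows "Bf d a f g = Bf d a g f"
proof -
  have "Bf d a f g = (\<Sum>j<d. \<Sum>i<d. a i j * f i * g j)" unfolding Bf_def by (rule sum.swap)
  also have "\<dots> = Bf d a g f" unfolding Bf_def
    by (intro sum.cong refl) (simp add: assms mult.commute mult.left_commute)
  finally show ?thesis .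
qed

lemma Bf_row: "Bf d a g f = (\<Sum>i<d. g i * (\<Sum>j<d. a i j * f j))"
  unfolding Bf_def by (simp add: sum_distrib_left algebra_simps)

lemma eig_sum:
  assumes d: "d > 0" and sym: "\<And>i j. i<d \<Longrightarrow> j<d \<Longrightarrow> a i j = a j i"
  shows "\<exists>u \<mu>. (\<Sum>i<d. (u i)^2) = 1 \<and> (\<forall>i<d. (\<Sum>j<d. a i j * u j) = \<mu> * u i)
      \<and> (\<forall>x. Bf d a x x \<le> \<mu> * (\<Sum>i<d. (x i)^2))"
proof -
  obtain u where u1: "(\<Sum>i<d. (u i)^2) = 1"
    and umax: "\<And>x. (\<Sum>i<d. (x i)^2) = 1 \<Longrightarrow> Bf d a x x \<le> Bf d a u u"
    using max_exists[OF d, of a] by blast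
  define \<mu> where "\<mu> = Bf d a u u"
  have ray: "Bf d a x x \<le> \<mu> * (\<Sum>i<d. (x i)^2)" for x
  proof (cases "(\<Sum>i<d. (x i)^2) = 0")
    case True
    then have "\<forall>i\<in>{..<d}. (x i)^2 = 0" by (subst sum_nonneg_eq_0_iff[symmetric]) auto
    then have "Bf d a x x = 0" unfolding Bf_def by simp
    then show ?thesis using True by simp
  next
    case False
    define n where "n = (\<Sum>i<d. (x i)^2)"
    have npos: "n > 0" using False unfolding n_def by (metis less_eq_real_def sum_nonneg zero_le_power2)
    define s where "s = sqrt n"
    have spos: "s > 0" using npos unfolding s_def by simp
    have s2: "s^2 = n" using npos unfolding s_def by simp
    define y where "y = (\<lambda>i. x i / s)"
    have xy: "x = (\<lambda>i. s * y i)" unfolding y_def using spos by auto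
    have "(\<Sum>i<d. (y i)^2) = (\<Sum>i<d. (x i)^2) / s^2"
      unfolding y_def by (simp add: power_divide sum_divide_distrib)
    then have y1: "(\<Sum>i<d. (y i)^2) = 1" using s2 npos unfolding n_def by simp
    have "Bf d a x x = Bf d a (\<lambda>i. s * y i) (\<lambda>i. s * y i)" using xy by simp
    also have "\<dots> = s^2 * Bf d a y y" by (rule Bf_scale)
    also have "\<dots> \<le> s^2 * \<mu>" unfolding \<mu>_def using umax[OF y1] by (intro mult_left_mono) auto
    finally show ?thesis using s2 unfolding n_def by (simp add: mult.commute)
  qed
  define w where "w = (\<lambda>i. (\<Sum>j<d. a i j * u j) - \<mu> * u i)"
  define S where "S = (\<Sum>i<d. (w i)^2)"
  define b where "b = Bf d a w w - \<mu> * S"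
  have key: "2 * t * S + t^2 * b \<le> 0" for t
  proof -
    define v where "v = (\<lambda>i. t * w i)"
    have "Bf d a (\<lambda>i. u i + v i) (\<lambda>i. u i + v i) \<le> \<mu> * (\<Sum>i<d. (u i + v i)^2)" by (rule ray)
    moreover have "Bf d a (\<lambda>i. u i + v i) (\<lambda>i. u i + v i) = \<mu> + 2 * t * Bf d a w u + t^2 * Bf d a w w"
      unfolding Bf_add v_def Bf_scale Bf_scale_r Bf_scale_l \<mu>_def
      using Bf_sym[OF sym, where f=u and g=w] by simp
    moreover have "Bf d a w u = S + \<mu> * (\<Sum>i<d. w i * u i)"
    proof -
      have "Bf d a w u = (\<Sum>i<d. w i * (w i + \<mu> * u i))"
        unfolding Bf_row by (intro sum.cong refl) (simp add: w_def)
      also have "\<dots> = S + \<mu> * (\<Sum>i<d. w i * u i)"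
        unfolding S_def by (simp add: sum.distrib sum_distrib_left algebra_simps power2_eq_square)
      finally show ?thesis .
    qed
    moreover have "(\<Sum>i<d. (u i + v i)^2) = 1 + 2 * t * (\<Sum>i<d. w i * u i) + t^2 * S"
      unfolding v_def S_def using u1
      by (simp add: power2_sum sum.distrib sum_distrib_left algebra_simps power_mult_distrib)
    ultimately show ?thesis unfolding b_def by (simp add: algebra_simps)
  qed
  have S0: "S \<le> 0"
  proof (rule ccontr)
    assume "\<not> S \<le> 0"
    then have Sp: "S > 0" by simp
    define t where "t = S / (\<bar>b\<bar> + 1)"
    have tp: "t > 0" using Sp unfolding t_def by simp
    have "t * \<bar>b\<bar> < S" unfolding t_def using Sp
      by (simp add: field_simps)
    then have "t^2 * \<bar>b\<bar> < t * S" using tp by (simp add: power2_eq_square mult.assoc)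
    moreover have "- (t^2 * \<bar>b\<bar>) \<le> t^2 * b" using mult_left_mono[of "-\<bar>b\<bar>" b "t^2"] by simp
    moreover have "t * S > 0" using tp Sp by simp
    ultimately have "2 * t * S + t^2 * b > 0" by linarith
    with key[of t] show False by simp
  qed
  have "\<forall>i\<in>{..<d}. (w i)^2 = 0"
  proof -
    have "S \<ge> 0" unfolding S_def by (intro sum_nonneg) auto
    then have "S = 0" using S0 by simp
    then show ?thesis unfolding S_def by (subst sum_nonneg_eq_0_iff[symmetric]) auto
  qed
  then have "\<forall>i<d. (\<Sum>j<d. a i j * u j) = \<mu> * u i" unfolding w_def by auto
  then show ?thesis using u1 ray by blast
qed

lemma qf_Bf:
  assumes A: "A \<in> carrier_mat d d" and x: "x \<in> carrier_vec d"
  shows "x \<bullet> (A *\<^sub>v x) = Bf d (\<lambda>i j. A $$ (i,j)) (\<lambda>i. x $ i) (\<lambda>i. x $ i)"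
  using A x unfolding Bf_def scalar_prod_def mult_mat_vec_def row_def
  by (simp add: sum_distrib_left atLeast0LessThan algebra_simps)

lemma sq_vec: fixes x :: "real vec" assumes x: "x \<in> carrier_vec d"
  shows "x \<bullet> x = (\<Sum>i<d. (x $ i)^2)"
  using x unfolding scalar_prod_def power2_eq_square by (simp add: atLeast0LessThan)

lemma lmax_char:
  assumes A: "A \<in> carrier_mat d d" and d: "d > 0"
    and sym: "\<And>i j. i<d \<Longrightarrow> j<d \<Longrightarrow> A $$ (i,j) = A $$ (j,i)"
  shows "\<exists>v. eigenvector A v (lambda_max A) \<and> (\<forall>x\<in>carrier_vec d. x \<bullet> (A *\<^sub>v x) \<le> lambda_max A * (x \<bullet> x))"
proof -
  obtain u \<mu> where u1: "(\<Sum>i<d. (u i)^2) = 1"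
    and ev: "\<forall>i<d. (\<Sum>j<d. A $$ (i,j) * u j) = \<mu> * u i"
    and ray: "\<forall>x. Bf d (\<lambda>i j. A $$ (i,j)) x x \<le> \<mu> * (\<Sum>i<d. (x i)^2)"
    using eig_sum[of d "\<lambda>i j. A $$ (i,j)", OF d sym] by blast
  have rayv: "x \<bullet> (A *\<^sub>v x) \<le> \<mu> * (x \<bullet> x)" if x: "x \<in> carrier_vec d" for x
    using ray qf_Bf[OF A x] sq_vec[OF x] by simp
  define v where "v = vec d u"
  have v: "v \<in> carrier_vec d" unfolding v_def by simp
  have Av: "A *\<^sub>v v = \<mu> \<cdot>\<^sub>v v"
  proof (rule eq_vecI)
    show "dim_vec (A *\<^sub>v v) = dim_vec (\<mu> \<cdot>\<^sub>v v)" using A v by simp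
    fix i assume "i < dim_vec (\<mu> \<cdot>\<^sub>v v)"
    then have i: "i < d" using v by simp
    have "(A *\<^sub>v v) $ i = (\<Sum>j<d. A $$ (i,j) * u j)"
      using A i unfolding v_def mult_mat_vec_def scalar_prod_def row_def
      by (simp add: atLeast0LessThan)
    also have "\<dots> = (\<mu> \<cdot>\<^sub>v v) $ i" using ev i unfolding v_def by simp
    finally show "(A *\<^sub>v v) $ i = (\<mu> \<cdot>\<^sub>v v) $ i" .
  qed
  have vv: "v \<bullet> v = 1" using sq_vec[OF v] u1 unfolding v_def by simp
  have v0: "v \<noteq> 0\<^sub>v d" using vv by auto
  have eigv: "eigenvector A v \<mu>" unfolding eigenvector_def using A v v0 Av by simp
  have fin: "finite {a. eigenvalue A a}"
  proof -
    have "char_poly A \<noteq> 0" using degree_monic_char_poly[OF A] by auto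
    then have "finite {a. poly (char_poly A) a = 0}" by (rule poly_roots_finite)
    then show ?thesis using eigenvalue_root_char_poly[OF A] by simp
  qed
  have le: "l \<le> \<mu>" if "eigenvalue A l" for l
  proof -
    from that obtain w where w: "eigenvector A w l" unfolding eigenvalue_def by blast
    then have wc: "w \<in> carrier_vec d" and w0: "w \<noteq> 0\<^sub>v d" and Aw: "A *\<^sub>v w = l \<cdot>\<^sub>v w"
      using A unfolding eigenvector_def by auto
    have wp: "w \<bullet> w > 0"
    proof (rule ccontr)
      assume "\<not> w \<bullet> w > 0"
      moreover have "w \<bullet> w \<ge> 0" unfolding sq_vec[OF wc] by (intro sum_nonneg) auto
      ultimately have "(\<Sum>i<d. (w $ i)^2) = 0" unfolding sq_vec[OF wc] by simp
      then have "\<forall>i\<in>{..<d}. (w $ i)^2 = 0" by (subst sum_nonneg_eq_0_iff[symmetric]) auto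
      then have "w = 0\<^sub>v d" using wc by (intro eq_vecI) auto
      with w0 show False by simp
    qed
    have "l * (w \<bullet> w) \<le> \<mu> * (w \<bullet> w)" using rayv[OF wc] Aw wc by simp
    then show ?thesis using wp by simp
  qed
  have "lambda_max A = \<mu>" unfolding lambda_max_def
    by (rule Max_eqI[OF fin]) (use le eigv eigenvalue_def in auto)
  then show ?thesis using eigv rayv by auto
qed


lemma smult_mat_vec:
  fixes A :: "real mat"
  assumes A: "A \<in> carrier_mat nr nc" and x: "x \<in> carrier_vec nc"
  shows "(k \<cdot>\<^sub>m A) *\<^sub>v x = k \<cdot>\<^sub>v (A *\<^sub>v x)"
  using A x by (intro eq_vecI) (auto simp: mult_mat_vec_def)

lemma gram:
  fixes B :: "real mat" assumes B: "B \<in> carrier_mat n d"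
  shows "2 \<cdot>\<^sub>m (transpose_mat B * B) \<in> carrier_mat d d"
    and "\<And>i j. i<d \<Longrightarrow> j<d \<Longrightarrow> (2 \<cdot>\<^sub>m (transpose_mat B * B)) $$ (i,j) = (2 \<cdot>\<^sub>m (transpose_mat B * B)) $$ (j,i)"
    and "\<And>x. x \<in> carrier_vec d \<Longrightarrow> x \<bullet> ((2 \<cdot>\<^sub>m (transpose_mat B * B)) *\<^sub>v x) = 2 * ((B *\<^sub>v x) \<bullet> (B *\<^sub>v x))"
proof -
  show "2 \<cdot>\<^sub>m (transpose_mat B * B) \<in> carrier_mat d d" using B by auto
  fix i j assume i: "i < d" and j: "j < d"
  have "col B i \<bullet> col B j = col B j \<bullet> col B i" using B i j by (intro comm_scalar_prod[of _ n]) auto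
  then show "(2 \<cdot>\<^sub>m (transpose_mat B * B)) $$ (i,j) = (2 \<cdot>\<^sub>m (transpose_mat B * B)) $$ (j,i)"
    using B i j by simp
next
  fix x :: "real vec" assume x: "x \<in> carrier_vec d"
  have Bt: "transpose_mat B \<in> carrier_mat d n" using B by simp
  have "(2 \<cdot>\<^sub>m (transpose_mat B * B)) *\<^sub>v x = 2 \<cdot>\<^sub>v (transpose_mat B *\<^sub>v (B *\<^sub>v x))"
    using B x Bt by (subst smult_mat_vec[of _ d d]) auto
  then have "x \<bullet> ((2 \<cdot>\<^sub>m (transpose_mat B * B)) *\<^sub>v x) = 2 * (x \<bullet> (transpose_mat B *\<^sub>v (B *\<^sub>v x)))"
    using B x by simp
  also have "x \<bullet> (transpose_mat B *\<^sub>v (B *\<^sub>v x)) = (transpose_mat B *\<^sub>v (B *\<^sub>v x)) \<bullet> x"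
    using B x by (intro comm_scalar_prod[of _ d]) auto
  also have "\<dots> = (B *\<^sub>v x) \<bullet> (B *\<^sub>v x)"
    using B x by (intro transpose_vec_mult_scalar) auto
  finally show "x \<bullet> ((2 \<cdot>\<^sub>m (transpose_mat B * B)) *\<^sub>v x) = 2 * ((B *\<^sub>v x) \<bullet> (B *\<^sub>v x))" .
qed

lemma avg_ineq:
  fixes y :: "real vec"
  assumes L: "L = k * m"
    and part_cover: "(\<Union>g<k. G g) = {0..<L}"
    and part_disj: "\<And>g h. g < k \<Longrightarrow> h < k \<Longrightarrow> g \<noteq> h \<Longrightarrow> G g \<inter> G h = {}"
    and part_size: "\<And>g. g < k \<Longrightarrow> card (G g) = m"
    and m: "m > 0" and y: "y \<in> carrier_vec L"
  shows "real m * ((avg_mat k L m G *\<^sub>v y) \<bullet> (avg_mat k L m G *\<^sub>v y)) \<le> y \<bullet> y"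
proof -
  let ?M = "avg_mat k L m G"
  define S where "S = (\<lambda>g. \<Sum>i\<in>G g. y $ i)"
  have sub: "G g \<subseteq> {0..<L}" if "g < k" for g using part_cover that by blast
  have fin: "finite (G g)" if "g < k" for g using sub[OF that] finite_subset by blast
  have My: "?M *\<^sub>v y \<in> carrier_vec k" unfolding avg_mat_def mult_mat_vec_def by simp
  have Mg: "(?M *\<^sub>v y) $ g = S g / m" if g: "g < k" for g
  proof -
    have "(?M *\<^sub>v y) $ g = (\<Sum>i\<in>{0..<L}. (if i \<in> G g then 1 / real m else 0) * y $ i)"
      using g y unfolding avg_mat_def mult_mat_vec_def scalar_prod_def row_def by simp
    also have "\<dots> = (\<Sum>i\<in>{0..<L}. if i \<in> G g then y $ i / real m else 0)"
      by (intro sum.cong refl) auto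
    also have "\<dots> = (\<Sum>i\<in>{0..<L} \<inter> G g. y $ i / real m)"
      by (rule sum.inter_restrict[symmetric]) simp
    also have "{0..<L} \<inter> G g = G g" using sub[OF g] by blast
    finally show ?thesis unfolding S_def by (simp add: sum_divide_distrib)
  qed
  have "real m * ((?M *\<^sub>v y) \<bullet> (?M *\<^sub>v y)) = real m * (\<Sum>g<k. (S g / m)^2)"
    using sq_vec[OF My] Mg by simp
  also have "\<dots> = (\<Sum>g<k. (S g)^2 / m)"
    using m by (simp add: sum_distrib_left power_divide power2_eq_square)
  also have "\<dots> \<le> (\<Sum>g<k. (\<Sum>i\<in>G g. (y $ i)^2) * card (G g) / m)"
    unfolding S_def by (intro sum_mono divide_right_mono sum_squared_le_sum_of_squares) auto
  also have "\<dots> = (\<Sum>g<k. (\<Sum>i\<in>G g. (y $ i)^2))"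
    using m part_size by (intro sum.cong refl) simp
  also have "\<dots> = (\<Sum>i\<in>(\<Union>g<k. G g). (y $ i)^2)"
    by (rule sum.UNION_disjoint[symmetric]) (use fin part_disj in auto)
  also have "\<dots> = y \<bullet> y" unfolding part_cover sq_vec[OF y] by (simp add: atLeast0LessThan)
  finally show ?thesis .
qed


lemma vec_pos:
  fixes w :: "real vec" assumes wc: "w \<in> carrier_vec d" and w0: "w \<noteq> 0\<^sub>v d"
  shows "w \<bullet> w > 0"
proof (rule ccontr)
  assume "\<not> w \<bullet> w > 0"
  moreover have "w \<bullet> w \<ge> 0" unfolding sq_vec[OF wc] by (intro sum_nonneg) auto
  ultimately have "(\<Sum>i<d. (w $ i)^2) = 0" unfolding sq_vec[OF wc] by simp
  then have "\<forall>i\<in>{..<d}. (w $ i)^2 = 0" by (subst sum_nonneg_eq_0_iff[symmetric]) auto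
  then have "w = 0\<^sub>v d" using wc by (intro eq_vecI) auto
  with w0 show False by simp
qed

theorem mainTheorem6:
  fixes V :: "real mat" and L d k m :: nat and G :: "nat \<Rightarrow> nat set"
  assumes V: "V \<in> carrier_mat L d"
    and d: "d > 0"
    and L: "L = k * m"
    and part_cover: "(\<Union>g<k. G g) = {0..<L}"
    and part_disj: "\<And>g h. g < k \<Longrightarrow> h < k \<Longrightarrow> g \<noteq> h \<Longrightarrow> G g \<inter> G h = {}"
    and part_size: "\<And>g. g < k \<Longrightarrow> card (G g) = m"
  shows "lambda_max (2 \<cdot>\<^sub>m (transpose_mat V * transpose_mat (avg_mat k L m G) * avg_mat k L m G * V))
           \<le> lambda_max (2 \<cdot>\<^sub>m (transpose_mat V * V)) / real m"
proof -
  let ?M = "avg_mat k L m G"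
  have Mc: "?M \<in> carrier_mat k L" unfolding avg_mat_def by simp
  have MV: "?M * V \<in> carrier_mat k d" using Mc V by simp
  have eq: "transpose_mat V * transpose_mat ?M * ?M * V = transpose_mat (?M * V) * (?M * V)"
  proof -
    have "transpose_mat V * transpose_mat ?M * ?M * V = (transpose_mat V * transpose_mat ?M) * (?M * V)"
      by (rule assoc_mult_mat[of _ d k _ L _ d]) (use Mc V in auto)
    then show ?thesis by (simp only: transpose_mult[OF Mc V])
  qed
  define Hb where "Hb = 2 \<cdot>\<^sub>m (transpose_mat (?M * V) * (?M * V))"
  define H where "H = 2 \<cdot>\<^sub>m (transpose_mat V * V)"
  note gb = gram[OF MV, folded Hb_def]
  note gh = gram[OF V, folded H_def]
  obtain v where ev: "eigenvector Hb v (lambda_max Hb)"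
    using lmax_char[OF gb(1) d gb(2)] by blast
  have rayH: "\<And>x. x \<in> carrier_vec d \<Longrightarrow> x \<bullet> (H *\<^sub>v x) \<le> lambda_max H * (x \<bullet> x)"
    using lmax_char[OF gh(1) d gh(2)] by blast
  have vc: "v \<in> carrier_vec d" and v0: "v \<noteq> 0\<^sub>v d" and Hv: "Hb *\<^sub>v v = lambda_max Hb \<cdot>\<^sub>v v"
    using ev gb(1) unfolding eigenvector_def by auto
  have vp: "v \<bullet> v > 0" by (rule vec_pos[OF vc v0])
  define y where "y = V *\<^sub>v v"
  have yc: "y \<in> carrier_vec L" unfolding y_def using V vc by simp
  have MVv: "(?M * V) *\<^sub>v v = ?M *\<^sub>v y" unfolding y_def using Mc V vc by simp
  have e1: "lambda_max Hb * (v \<bullet> v) = 2 * ((?M *\<^sub>v y) \<bullet> (?M *\<^sub>v y))"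
    using gb(3)[OF vc] Hv vc MVv by simp
  have e2: "2 * (y \<bullet> y) \<le> lambda_max H * (v \<bullet> v)"
    using gh(3)[OF vc] rayH[OF vc] unfolding y_def by simp
  have goal: "lambda_max Hb \<le> lambda_max H / real m"
  proof (cases "m = 0")
    case True
    then have L0: "L = 0" using L by simp
    have "?M *\<^sub>v y = 0\<^sub>v k" using Mc yc L0
      by (intro eq_vecI) (auto simp: mult_mat_vec_def scalar_prod_def)
    then have "lambda_max Hb * (v \<bullet> v) = 0" using e1 by simp
    then have "lambda_max Hb = 0" using vp by simp
    then show ?thesis using True by simp
  next
    case False
    then have mp: "m > 0" by simp
    have "real m * (lambda_max Hb * (v \<bullet> v)) \<le> 2 * (y \<bullet> y)"
      using avg_ineq[OF L part_cover part_disj part_size mp yc] e1 by simp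
    also have "\<dots> \<le> lambda_max H * (v \<bullet> v)" by (rule e2)
    finally have "(real m * lambda_max Hb) * (v \<bullet> v) \<le> lambda_max H * (v \<bullet> v)"
      by (simp add: mult.assoc)
    then have "real m * lambda_max Hb \<le> lambda_max H" using vp by simp
    then show ?thesis using mp by (simp add: pos_le_divide_eq mult.commute)
  qed
  then show ?thesis unfolding eq Hb_def H_def .
qed

end
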